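(* In $\mathbb Z[E(\mathbb Q)]^-$ the following identities hold: $$7\,(x)\diamond(y)+(x_1)\diamond(y_1)=-2\,(-y)\diamond(1+y)+(x-y)\diamond(1-x+y),$$ $$5\,(x)\diamond(y)+(x_2)\diamond(y_2)=-\,(-y)\diamond(1+y)+(x-y)\diamond(1-x+y).$$
   Context: Let $E$ be the elliptic curve $y^2+y=x^3-x$ over $\mathbb Q$ (conductor 37), with origin the point at infinity $O$. Its Mordell–Weil group $E(\mathbb Q)$ is infinite cyclic, generated by $P=(0,0)$. On $E$, consider the rational functions $x,\ y$ and $$x_1=x-1,\quad y_1=y-2x+2,\qquad x_2=x-1,\quad y_2=-x+y+1,$$ together with $-y,\ 1+y,\ x-y,\ 1-x+y$. All of these have divisors supported on $E(\mathbb Q)$. Let $\mathbb Z[E(\mathbb Q)]^-$ be the quotient of the free abelian group $\mathbb Z[E(\mathbb Q)]$ on the symbols $[Q]$, $Q\in E(\mathbb Q)$, by the subgroup generated by all $[Q]+[-Q]$. For nonconstant functions $f,g$ on $E$ with divisors $$(f)=\sum_{n\in\mathbb Z}a_n[nP],\qquad (g)=\sum_{n\in\mathbb Z}b_n[nP],$$ define $$(f)\diamond(g)=\sum_{m,n}a_nb_m\,[(n-m)P]\in\mathbb Z[E(\mathbb Q)]^-.$$ *)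

theory Defs
  imports "HOL-Computational_Algebra.Polynomial"
begin

datatype pt = Inf | Aff rat rat

fun onE :: "pt \<Rightarrow> bool" where
  "onE Inf = True"
| "onE (Aff x y) = (y^2 + y = x^3 - x)"

fun negE :: "pt \<Rightarrow> pt" where
  "negE Inf = Inf"
| "negE (Aff x y) = Aff x (- 1 - y)"

text \<open>Chord-tangent group law for a Weierstrass curve with a1 = a2 = a6 = 0, a3 = 1, a4 = -1.\<close>
fun addE :: "pt \<Rightarrow> pt \<Rightarrow> pt" where
  "addE Inf Q = Q"
| "addE P Inf = P"
| "addE (Aff x1 y1) (Aff x2 y2) =
     (if x1 = x2 \<and> y1 + y2 + 1 = 0 then Inf
      else (let l = (if x1 = x2 then (3 * x1^2 - 1) / (2 * y1 + 1) else (y2 - y1) / (x2 - x1));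
                v = y1 - l * x1;
                x3 = l^2 - x1 - x2
            in Aff x3 (- (l * x3 + v) - 1)))"

definition subE :: "pt \<Rightarrow> pt \<Rightarrow> pt" where
  "subE P Q = addE P (negE Q)"

type_synonym linf = "rat \<times> rat \<times> rat"

text \<open>Order of vanishing at an affine point of E lying on the line f = 0:
  the intersection multiplicity of the line with E there, i.e. the order of the root of the
  cubic equation restricted to the (parametrised) line.\<close>
fun ordAff :: "linf \<Rightarrow> rat \<Rightarrow> rat \<Rightarrow> nat" where
  "ordAff (al, be, ga) a b =
     (if ga \<noteq> 0 then
        (let L = [: - al / ga, - be / ga :] in order a (L^2 + L - [:0, 1:]^3 + [:0, 1:]))
      else
        (let c = - al / be in order b ([:0, 1:]^2 + [:0, 1:] - [: c^3 - c :])))"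

fun evalL :: "linf \<Rightarrow> rat \<Rightarrow> rat \<Rightarrow> rat" where
  "evalL (al, be, ga) a b = al + be * a + ga * b"

text \<open>Divisor (restricted to rational points) of a nonconstant linear function; pole of order
  3 at O for non-vertical lines, order 2 for vertical ones.\<close>
fun divL :: "linf \<Rightarrow> pt \<Rightarrow> int" where
  "divL (al, be, ga) Inf = - (if ga \<noteq> 0 then 3 else 2)"
| "divL f (Aff a b) = (if onE (Aff a b) \<and> evalL f a b = 0 then int (ordAff f a b) else 0)"

definition diamond :: "(pt \<Rightarrow> int) \<Rightarrow> (pt \<Rightarrow> int) \<Rightarrow> pt \<Rightarrow> int" where
  "diamond d e T = (\<Sum>(Q, R) \<in> {(Q, R). d Q \<noteq> 0 \<and> e R \<noteq> 0 \<and> subE Q R = T}. d Q * e R)"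

definition diaL :: "linf \<Rightarrow> linf \<Rightarrow> pt \<Rightarrow> int" where
  "diaL f g = diamond (divL f) (divL g)"

inductive_set Zminus_rel :: "(pt \<Rightarrow> int) set" where
  zero: "(\<lambda>_. 0) \<in> Zminus_rel"
| gen: "onE Q \<Longrightarrow> c \<in> Zminus_rel \<Longrightarrow>
          (\<lambda>T. c T + k * ((if T = Q then 1 else 0) + (if T = negE Q then 1 else 0))) \<in> Zminus_rel"

definition eqm :: "(pt \<Rightarrow> int) \<Rightarrow> (pt \<Rightarrow> int) \<Rightarrow> bool" where
  "eqm c d \<longleftrightarrow> (\<lambda>T. c T - d T) \<in> Zminus_rel"

definition fx :: linf where "fx = (0, 1, 0)"
definition fy :: linf where "fy = (0, 0, 1)"
definition fx1 :: linf where "fx1 = (-1, 1, 0)"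
definition fy1 :: linf where "fy1 = (2, -2, 1)"
definition fx2 :: linf where "fx2 = (-1, 1, 0)"
definition fy2 :: linf where "fy2 = (1, -1, 1)"
definition fmy :: linf where "fmy = (0, 0, -1)"
definition f1py :: linf where "f1py = (1, 0, 1)"
definition fxmy :: linf where "fxmy = (0, 1, -1)"
definition f1mxpy :: linf where "f1mxpy = (1, -1, 1)"

end

theory Submission imports Defs begin

definition ind :: "pt \<Rightarrow> pt \<Rightarrow> int" where "ind Q T = (if T = Q then 1 else 0)"
definition ord1 :: "rat \<Rightarrow> rat \<Rightarrow> nat" where "ord1 a r = (if a = r then 1 else 0)"

lemma order_lin: "order a [:-r, 1:] = ord1 a r"
proof (cases "a = r")
  case True
  then show ?thesis using order_power_n_n[of a 1] by (simp add: ord1_def)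
next
  case False
  then show ?thesis by (intro order_0I[THEN trans]) (auto simp: ord1_def)
qed

lemma divL_nv:
  fixes al be ga r1 r2 r3 :: rat
  assumes "ga \<noteq> 0"
    and "[:-al/ga, -be/ga:]^2 + [:-al/ga,-be/ga:] - [:0,1:]^3 + [:0,1:] = - ([:-r1,1:]*[:-r2,1:]*[:-r3,1:])"
  shows "divL (al,be,ga) (Aff a b) = (if al + be*a + ga*b = 0 then int (ord1 a r1 + ord1 a r2 + ord1 a r3) else 0)"
proof -
  let ?L = "[:-al/ga, -be/ga:]"
  let ?p = "?L^2 + ?L - [:0,1:]^3 + [:0,1:]"
  have ne: "[:-r1,1:]*[:-r2,1:]*[:-r3,1:] \<noteq> (0::rat poly)" by auto
  have ord: "order a ?p = ord1 a r1 + ord1 a r2 + ord1 a r3"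
    unfolding assms(2) order_uminus using ne
    by (subst order_mult, simp, subst order_mult, simp) (simp add: order_lin)
  show ?thesis
  proof (cases "al + be*a + ga*b = 0")
    case True
    then have b: "b = -al/ga - be/ga * a" using assms(1) by (simp add: field_simps)
    have "poly ?p a = b^2 + b - a^3 + a" by (simp add: b algebra_simps power2_eq_square)
    also have "poly ?p a = - ((a - r1)*(a-r2)*(a-r3))" unfolding assms(2) by (simp add: algebra_simps)
    finally have on: "onE (Aff a b) \<longleftrightarrow> (a = r1 \<or> a = r2 \<or> a = r3)" by auto
    show ?thesis using True assms(1) ord on by (auto simp: Let_def ord1_def)
  next
    case False then show ?thesis by simp
  qed
qed

lemma divL_v:
  fixes al be s1 s2 :: rat
  assumes "be \<noteq> 0"
    and "[:0,1:]^2 + [:0,1:] - [: (-al/be)^3 - (-al/be) :] = [:-s1,1:]*[:-s2,1:]"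
  shows "divL (al,be,0) (Aff a b) = (if al + be*a = 0 then int (ord1 b s1 + ord1 b s2) else 0)"
proof -
  let ?c = "-al/be"
  let ?p = "[:0,1:]^2 + [:0,1:] - [: ?c^3 - ?c :] :: rat poly"
  have ord: "order b ?p = ord1 b s1 + ord1 b s2"
    unfolding assms(2) by (subst order_mult, simp) (simp add: order_lin)
  show ?thesis
  proof (cases "al + be*a = 0")
    case True
    then have a: "a = ?c" using assms(1) by (simp add: field_simps)
    have "poly ?p b = b^2 + b - (a^3 - a)" by (simp add: a power2_eq_square algebra_simps)
    also have "poly ?p b = (b - s1)*(b-s2)" unfolding assms(2) by (simp add: algebra_simps)
    finally have on: "onE (Aff a b) \<longleftrightarrow> (b = s1 \<or> b = s2)" by auto
    show ?thesis using True assms(1) ord on by (auto simp: Let_def ord1_def)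
  next
    case False then show ?thesis by simp
  qed
qed

lemma divL_fx: "divL fx = (\<lambda>T. ind (Aff 0 0) T + ind (Aff 0 (-1)) T - 2 * ind Inf T)"
proof
  fix T show "divL fx T = ind (Aff 0 0) T + ind (Aff 0 (-1)) T - 2 * ind Inf T"
  proof (cases T)
    case (Aff a b)
    have "divL (0,1,0) (Aff a b) = (if 0 + 1*a = 0 then int (ord1 b 0 + ord1 b (-1)) else 0)"
      by (rule divL_v) (simp_all add: power2_eq_square power3_eq_cube algebra_simps)
    then show ?thesis by (simp add: Aff fx_def ind_def ord1_def)
  qed (simp add: fx_def ind_def)
qed

lemma divL_fy: "divL fy = (\<lambda>T. ind (Aff 0 0) T + ind (Aff 1 0) T + ind (Aff (-1) 0) T - 3 * ind Inf T)"
proof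
  fix T show "divL fy T = ind (Aff 0 0) T + ind (Aff 1 0) T + ind (Aff (-1) 0) T - 3 * ind Inf T"
  proof (cases T)
    case (Aff a b)
    have "divL (0,0,1) (Aff a b) = (if 0 + 0*a + 1*b = 0 then int (ord1 a 0 + ord1 a 1 + ord1 a (-1)) else 0)"
      by (rule divL_nv) (simp_all add: power2_eq_square power3_eq_cube algebra_simps)
    then show ?thesis by (simp add: Aff fy_def ind_def ord1_def)
  qed (simp add: fy_def ind_def)
qed

lemma divL_fx1: "divL fx1 = (\<lambda>T. ind (Aff 1 0) T + ind (Aff 1 (-1)) T - 2 * ind Inf T)"
proof
  fix T show "divL fx1 T = ind (Aff 1 0) T + ind (Aff 1 (-1)) T - 2 * ind Inf T"
  proof (cases T)
    case (Aff a b)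
    have "divL (-1,1,0) (Aff a b) = (if -1 + 1*a = 0 then int (ord1 b 0 + ord1 b (-1)) else 0)"
      by (rule divL_v) (simp_all add: power2_eq_square power3_eq_cube algebra_simps)
    then show ?thesis by (simp add: Aff fx1_def ind_def ord1_def)
  qed (simp add: fx1_def ind_def)
qed

lemma divL_fx2: "divL fx2 = (\<lambda>T. ind (Aff 1 0) T + ind (Aff 1 (-1)) T - 2 * ind Inf T)"
proof
  fix T show "divL fx2 T = ind (Aff 1 0) T + ind (Aff 1 (-1)) T - 2 * ind Inf T"
  proof (cases T)
    case (Aff a b)
    have "divL (-1,1,0) (Aff a b) = (if -1 + 1*a = 0 then int (ord1 b 0 + ord1 b (-1)) else 0)"
      by (rule divL_v) (simp_all add: power2_eq_square power3_eq_cube algebra_simps)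
    then show ?thesis by (simp add: Aff fx2_def ind_def ord1_def)
  qed (simp add: fx2_def ind_def)
qed

lemma divL_fy1: "divL fy1 = (\<lambda>T. ind (Aff 1 0) T + ind (Aff 1 0) T + ind (Aff 2 2) T - 3 * ind Inf T)"
proof
  fix T show "divL fy1 T = ind (Aff 1 0) T + ind (Aff 1 0) T + ind (Aff 2 2) T - 3 * ind Inf T"
  proof (cases T)
    case (Aff a b)
    have "divL (2,-2,1) (Aff a b) = (if 2 + (-2)*a + 1*b = 0 then int (ord1 a 1 + ord1 a 1 + ord1 a 2) else 0)"
      by (rule divL_nv) (simp_all add: power2_eq_square power3_eq_cube algebra_simps)
    then show ?thesis by (simp add: Aff fy1_def ind_def ord1_def)
  qed (simp add: fy1_def ind_def)
qed

lemma divL_fy2: "divL fy2 = (\<lambda>T. ind (Aff 1 0) T + ind (Aff 0 (-1)) T + ind (Aff 0 (-1)) T - 3 * ind Inf T)"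
proof
  fix T show "divL fy2 T = ind (Aff 1 0) T + ind (Aff 0 (-1)) T + ind (Aff 0 (-1)) T - 3 * ind Inf T"
  proof (cases T)
    case (Aff a b)
    have "divL (1,-1,1) (Aff a b) = (if 1 + (-1)*a + 1*b = 0 then int (ord1 a 1 + ord1 a 0 + ord1 a 0) else 0)"
      by (rule divL_nv) (simp_all add: power2_eq_square power3_eq_cube algebra_simps)
    then show ?thesis by (simp add: Aff fy2_def ind_def ord1_def)
  qed (simp add: fy2_def ind_def)
qed

lemma divL_fmy: "divL fmy = (\<lambda>T. ind (Aff 0 0) T + ind (Aff 1 0) T + ind (Aff (-1) 0) T - 3 * ind Inf T)"
proof
  fix T show "divL fmy T = ind (Aff 0 0) T + ind (Aff 1 0) T + ind (Aff (-1) 0) T - 3 * ind Inf T"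
  proof (cases T)
    case (Aff a b)
    have "divL (0,0,-1) (Aff a b) = (if 0 + 0*a + (-1)*b = 0 then int (ord1 a 0 + ord1 a 1 + ord1 a (-1)) else 0)"
      by (rule divL_nv) (simp_all add: power2_eq_square power3_eq_cube algebra_simps)
    then show ?thesis by (simp add: Aff fmy_def ind_def ord1_def)
  qed (simp add: fmy_def ind_def)
qed

lemma divL_f1py: "divL f1py = (\<lambda>T. ind (Aff 0 (-1)) T + ind (Aff 1 (-1)) T + ind (Aff (-1) (-1)) T - 3 * ind Inf T)"
proof
  fix T show "divL f1py T = ind (Aff 0 (-1)) T + ind (Aff 1 (-1)) T + ind (Aff (-1) (-1)) T - 3 * ind Inf T"
  proof (cases T)
    case (Aff a b)
    have "divL (1,0,1) (Aff a b) = (if 1 + 0*a + 1*b = 0 then int (ord1 a 0 + ord1 a 1 + ord1 a (-1)) else 0)"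
      by (rule divL_nv) (simp_all add: power2_eq_square power3_eq_cube algebra_simps)
    then show ?thesis by (simp add: Aff f1py_def ind_def ord1_def)
  qed (simp add: f1py_def ind_def)
qed

lemma divL_fxmy: "divL fxmy = (\<lambda>T. ind (Aff 0 0) T + ind (Aff 2 2) T + ind (Aff (-1) (-1)) T - 3 * ind Inf T)"
proof
  fix T show "divL fxmy T = ind (Aff 0 0) T + ind (Aff 2 2) T + ind (Aff (-1) (-1)) T - 3 * ind Inf T"
  proof (cases T)
    case (Aff a b)
    have "divL (0,1,-1) (Aff a b) = (if 0 + 1*a + (-1)*b = 0 then int (ord1 a 0 + ord1 a 2 + ord1 a (-1)) else 0)"
      by (rule divL_nv) (simp_all add: power2_eq_square power3_eq_cube algebra_simps)
    then show ?thesis by (simp add: Aff fxmy_def ind_def ord1_def)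
  qed (simp add: fxmy_def ind_def)
qed

lemma divL_f1mxpy: "divL f1mxpy = (\<lambda>T. ind (Aff 1 0) T + ind (Aff 0 (-1)) T + ind (Aff 0 (-1)) T - 3 * ind Inf T)"
proof
  fix T show "divL f1mxpy T = ind (Aff 1 0) T + ind (Aff 0 (-1)) T + ind (Aff 0 (-1)) T - 3 * ind Inf T"
  proof (cases T)
    case (Aff a b)
    have "divL (1,-1,1) (Aff a b) = (if 1 + (-1)*a + 1*b = 0 then int (ord1 a 1 + ord1 a 0 + ord1 a 0) else 0)"
      by (rule divL_nv) (simp_all add: power2_eq_square power3_eq_cube algebra_simps)
    then show ?thesis by (simp add: Aff f1mxpy_def ind_def ord1_def)
  qed (simp add: f1mxpy_def ind_def)
qed


lemma diamond_fin:
  assumes K: "finite K" and L: "finite L" and d: "\<And>Q. Q \<notin> K \<Longrightarrow> d Q = 0"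
    and e: "\<And>R. R \<notin> L \<Longrightarrow> e R = 0"
  shows "diamond d e T = (\<Sum>Q\<in>K. \<Sum>R\<in>L. d Q * e R * ind (subE Q R) T)"
proof -
  have "diamond d e T = (\<Sum>(Q, R) \<in> K \<times> L. d Q * e R * ind (subE Q R) T)"
    unfolding diamond_def
  proof (rule sum.mono_neutral_cong_left)
    show "finite (K \<times> L)" using K L by simp
    show "{(Q, R). d Q \<noteq> 0 \<and> e R \<noteq> 0 \<and> subE Q R = T} \<subseteq> K \<times> L" using d e by force
    show "\<forall>i\<in>K \<times> L - {(Q, R). d Q \<noteq> 0 \<and> e R \<noteq> 0 \<and> subE Q R = T}.
        (case i of (Q, R) \<Rightarrow> d Q * e R * ind (subE Q R) T) = 0"
      by (auto simp: ind_def split: if_splits)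
    show "\<And>x. x \<in> {(Q, R). d Q \<noteq> 0 \<and> e R \<noteq> 0 \<and> subE Q R = T} \<Longrightarrow>
         (case x of (Q, R) \<Rightarrow> d Q * e R) = (case x of (Q, R) \<Rightarrow> d Q * e R * ind (subE Q R) T)"
      by (auto simp: ind_def)
  qed
  also have "\<dots> = (\<Sum>Q\<in>K. \<Sum>R\<in>L. d Q * e R * ind (subE Q R) T)"
    by (rule sum.cartesian_product[symmetric])
  finally show ?thesis .
qed

definition zm :: "(pt \<times> int) list \<Rightarrow> pt \<Rightarrow> int" where
  "zm xs T = (\<Sum>(Q,k)\<leftarrow>xs. k * (ind Q T + ind (negE Q) T))"

lemma zm_in: "(\<forall>(Q,k)\<in>set xs. onE Q) \<Longrightarrow> zm xs \<in> Zminus_rel"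
proof (induction xs)
  case Nil
  then show ?case using Zminus_rel.zero by (simp add: zm_def)
next
  case (Cons a xs)
  obtain Q k where a: "a = (Q,k)" by force
  have "(\<lambda>T. zm xs T + k * ((if T = Q then 1 else 0) + (if T = negE Q then 1 else 0))) \<in> Zminus_rel"
    using Cons a by (intro Zminus_rel.gen) auto
  moreover have "(\<lambda>T. zm xs T + k * ((if T = Q then 1 else 0) + (if T = negE Q then 1 else 0))) = zm (a#xs)"
    by (auto simp: zm_def a ind_def)
  ultimately show ?case by simp
qed

lemma diaL_fx_fy: "diaL fx fy T = (\<Sum>Q\<in>{Inf, Aff 0 0, Aff 0 (-1)}. \<Sum>R\<in>{Inf, Aff 0 0, Aff 1 0, Aff (-1) 0}. divL fx Q * divL fy R * ind (subE Q R) T)"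
  unfolding diaL_def by (rule diamond_fin) (auto simp: divL_fx divL_fy ind_def)

lemma diaL_fx1_fy1: "diaL fx1 fy1 T = (\<Sum>Q\<in>{Inf, Aff 1 0, Aff 1 (-1)}. \<Sum>R\<in>{Inf, Aff 1 0, Aff 2 2}. divL fx1 Q * divL fy1 R * ind (subE Q R) T)"
  unfolding diaL_def by (rule diamond_fin) (auto simp: divL_fx1 divL_fy1 ind_def)

lemma diaL_fx2_fy2: "diaL fx2 fy2 T = (\<Sum>Q\<in>{Inf, Aff 1 0, Aff 1 (-1)}. \<Sum>R\<in>{Inf, Aff 1 0, Aff 0 (-1)}. divL fx2 Q * divL fy2 R * ind (subE Q R) T)"
  unfolding diaL_def by (rule diamond_fin) (auto simp: divL_fx2 divL_fy2 ind_def)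

lemma diaL_fmy_f1py: "diaL fmy f1py T = (\<Sum>Q\<in>{Inf, Aff 0 0, Aff 1 0, Aff (-1) 0}. \<Sum>R\<in>{Inf, Aff 0 (-1), Aff 1 (-1), Aff (-1) (-1)}. divL fmy Q * divL f1py R * ind (subE Q R) T)"
  unfolding diaL_def by (rule diamond_fin) (auto simp: divL_fmy divL_f1py ind_def)

lemma diaL_fxmy_f1mxpy: "diaL fxmy f1mxpy T = (\<Sum>Q\<in>{Inf, Aff 0 0, Aff 2 2, Aff (-1) (-1)}. \<Sum>R\<in>{Inf, Aff 1 0, Aff 0 (-1)}. divL fxmy Q * divL f1mxpy R * ind (subE Q R) T)"
  unfolding diaL_def by (rule diamond_fin) (auto simp: divL_fxmy divL_f1mxpy ind_def)

lemma part1: "eqm (\<lambda>T. 7 * diaL fx fy T + diaL fx1 fy1 T) (\<lambda>T. -2 * diaL fmy f1py T + diaL fxmy f1mxpy T)"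
proof -
  have "(\<lambda>T. (7 * diaL fx fy T + diaL fx1 fy1 T) - (-2 * diaL fmy f1py T + diaL fxmy f1mxpy T)) = zm [(Inf,33),(Aff 0 0,-25),(Aff 1 0,-7),(Aff (-1) (-1),-7),(Aff 2 (-3),5),(Aff 6 14,1)]"
  proof
    fix T
    show "(7 * diaL fx fy T + diaL fx1 fy1 T) - (-2 * diaL fmy f1py T + diaL fxmy f1mxpy T) = zm [(Inf,33),(Aff 0 0,-25),(Aff 1 0,-7),(Aff (-1) (-1),-7),(Aff 2 (-3),5),(Aff 6 14,1)] T"
    proof (cases "T \<in> set [Aff (21/25) (-56/125), Aff (-5/9) (-35/27), Aff 6 (-15), Aff (1/4) (-3/8), Aff 2 2, Aff (-1) 0, Aff 1 (-1), Aff 0 (-1), Inf, Aff 0 0, Aff 1 0, Aff (-1) (-1), Aff 2 (-3), Aff (1/4) (-5/8), Aff 6 14, Aff (-5/9) (8/27), Aff (21/25) (-69/125)]")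
      case True
      then show ?thesis
        unfolding diaL_fx_fy diaL_fx1_fy1 diaL_fx2_fy2 diaL_fmy_f1py diaL_fxmy_f1mxpy
        by (auto simp: divL_fx divL_fy divL_fx1 divL_fy1 divL_fx2 divL_fy2 divL_fmy divL_f1py divL_fxmy divL_f1mxpy ind_def subE_def zm_def Let_def)
    next
      case False
      then show ?thesis
        unfolding diaL_fx_fy diaL_fx1_fy1 diaL_fx2_fy2 diaL_fmy_f1py diaL_fxmy_f1mxpy
        by (simp add: divL_fx divL_fy divL_fx1 divL_fy1 divL_fx2 divL_fy2 divL_fmy divL_f1py divL_fxmy divL_f1mxpy ind_def subE_def zm_def Let_def)
    qed
  qed
  moreover have "zm [(Inf,33),(Aff 0 0,-25),(Aff 1 0,-7),(Aff (-1) (-1),-7),(Aff 2 (-3),5),(Aff 6 14,1)] \<in> Zminus_rel" by (rule zm_in) simp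
  ultimately show ?thesis unfolding eqm_def by simp
qed

lemma part2: "eqm (\<lambda>T. 5 * diaL fx fy T + diaL fx2 fy2 T) (\<lambda>T. - diaL fmy f1py T + diaL fxmy f1mxpy T)"
proof -
  have "(\<lambda>T. (5 * diaL fx fy T + diaL fx2 fy2 T) - (- diaL fmy f1py T + diaL fxmy f1mxpy T)) = zm [(Inf,21),(Aff 0 0,-17),(Aff 1 0,-5),(Aff (-1) (-1),-3),(Aff 2 (-3),4)]"
  proof
    fix T
    show "(5 * diaL fx fy T + diaL fx2 fy2 T) - (- diaL fmy f1py T + diaL fxmy f1mxpy T) = zm [(Inf,21),(Aff 0 0,-17),(Aff 1 0,-5),(Aff (-1) (-1),-3),(Aff 2 (-3),4)] T"
    proof (cases "T \<in> set [Aff (21/25) (-56/125), Aff (-5/9) (-35/27), Aff 6 (-15), Aff (1/4) (-3/8), Aff 2 2, Aff (-1) 0, Aff 1 (-1), Aff 0 (-1), Inf, Aff 0 0, Aff 1 0, Aff (-1) (-1), Aff 2 (-3), Aff (1/4) (-5/8), Aff 6 14, Aff (-5/9) (8/27), Aff (21/25) (-69/125)]")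
      case True
      then show ?thesis
        unfolding diaL_fx_fy diaL_fx1_fy1 diaL_fx2_fy2 diaL_fmy_f1py diaL_fxmy_f1mxpy
        by (auto simp: divL_fx divL_fy divL_fx1 divL_fy1 divL_fx2 divL_fy2 divL_fmy divL_f1py divL_fxmy divL_f1mxpy ind_def subE_def zm_def Let_def)
    next
      case False
      then show ?thesis
        unfolding diaL_fx_fy diaL_fx1_fy1 diaL_fx2_fy2 diaL_fmy_f1py diaL_fxmy_f1mxpy
        by (simp add: divL_fx divL_fy divL_fx1 divL_fy1 divL_fx2 divL_fy2 divL_fmy divL_f1py divL_fxmy divL_f1mxpy ind_def subE_def zm_def Let_def)
    qed
  qed
  moreover have "zm [(Inf,21),(Aff 0 0,-17),(Aff 1 0,-5),(Aff (-1) (-1),-3),(Aff 2 (-3),4)] \<in> Zminus_rel" by (rule zm_in) simp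
  ultimately show ?thesis unfolding eqm_def by simp
qed

theorem mainTheorem2:
  shows "eqm (\<lambda>T. 7 * diaL fx fy T + diaL fx1 fy1 T)
             (\<lambda>T. -2 * diaL fmy f1py T + diaL fxmy f1mxpy T)
       \<and> eqm (\<lambda>T. 5 * diaL fx fy T + diaL fx2 fy2 T)
             (\<lambda>T. - diaL fmy f1py T + diaL fxmy f1mxpy T)"
  using part1 part2 by simp

end
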